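(* Let $\varphi:[r_+,\infty)\to\mathbb{C}$ be a $C^1$ function. Then for any $r'>r_+$, $$\int_{r_+}^{r'}|\varphi|^2\,dr\leq C\Big(\int_{r_+}^{r'}\mu^2r^2|\partial_r\varphi|^2\,dr+(r'-r_+)|\varphi(r')|^2\Big),$$ and if moreover $\lim_{r\to\infty}r|\varphi(r)|^2=0$, then $$\int_{r_+}^{\infty}|\varphi|^2\,dr\leq C\int_{r_+}^{\infty}\mu^2r^2|\partial_r\varphi|^2\,dr,$$ where $C$ is a constant depending only on $M$ and $a$.
   Context: $M>0$, $|a|<M$, $\Delta=r^2-2Mr+a^2$, $r_+=M+\sqrt{M^2-a^2}$, $\mu=\Delta/(r^2+a^2)$. *)

theory Defs
  imports "HOL-Analysis.Analysis"
begin

definition Kerr_Delta :: "real \<Rightarrow> real \<Rightarrow> real \<Rightarrow> real" where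
  "Kerr_Delta M a r = r^2 - 2*M*r + a^2"

definition Kerr_rplus :: "real \<Rightarrow> real \<Rightarrow> real" where
  "Kerr_rplus M a = M + sqrt (M^2 - a^2)"

definition Kerr_mu :: "real \<Rightarrow> real \<Rightarrow> real \<Rightarrow> real" where
  "Kerr_mu M a r = Kerr_Delta M a r / (r^2 + a^2)"

end

theory Submission
  imports Defs
begin

lemma hardy_core:
  fixes \<phi> \<phi>' :: "real \<Rightarrow> complex"
  assumes RX: "R < X"
  and der: "\<forall>r\<in>{R..X}. (\<phi> has_vector_derivative \<phi>' r) (at r within {R..X})"
  and cont: "continuous_on {R..X} \<phi>'"
  shows "integral {R..X} (\<lambda>r. (cmod (\<phi> r))^2) \<le> 2*((X-R)*(cmod (\<phi> X))^2) + 4*integral {R..X} (\<lambda>r. (r-R)^2*(cmod (\<phi>' r))^2)"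
proof -
  have cphi: "continuous_on {R..X} \<phi>"
    by (rule continuous_on_vector_derivative) (use der in auto)
  define h where "h r = complex_of_real (r-R) * (\<phi> r * cnj (\<phi> r))" for r
  define h' where "h' r = complex_of_real (r-R) * (\<phi> r * cnj (\<phi>' r) + \<phi>' r * cnj (\<phi> r)) + complex_of_real 1 * (\<phi> r * cnj (\<phi> r))" for r
  have hd: "\<forall>r\<in>{R..X}. (h has_vector_derivative h' r) (at r within {R..X})"
  proof
    fix r assume r: "r \<in> {R..X}"
    have d1: "((\<lambda>r. complex_of_real (r-R)) has_vector_derivative complex_of_real 1) (at r within {R..X})"
      by (intro has_vector_derivative_of_real derivative_eq_intros) auto
    have d2: "((\<lambda>r. \<phi> r * cnj (\<phi> r)) has_vector_derivative (\<phi> r * cnj (\<phi>' r) + \<phi>' r * cnj (\<phi> r))) (at r within {R..X})"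
      by (intro has_vector_derivative_mult has_vector_derivative_cnj) (use der r in auto)
    show "(h has_vector_derivative h' r) (at r within {R..X})"
      unfolding h_def h'_def by (rule has_vector_derivative_mult[OF d1 d2])
  qed
  have "(h' has_integral (h X - h R)) {R..X}"
    by (rule fundamental_theorem_of_calculus) (use RX hd in auto)
  from has_integral_linear[OF this bounded_linear_Re]
  have hi: "((\<lambda>r. Re (h' r)) has_integral Re (h X - h R)) {R..X}" by (simp add: o_def)
  have nsq: "Im z * Im z + Re z * Re z = (cmod z)^2" for z :: complex
    using cmod_power2[of z] by (simp add: power2_eq_square)
  have re_h': "Re (h' r) = (cmod (\<phi> r))^2 + (r-R)*(2*Re (\<phi> r * cnj (\<phi>' r)))" for r
    unfolding h'_def by (simp add: nsq algebra_simps)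
  have re_h: "Re (h X - h R) = (X-R)*(cmod (\<phi> X))^2"
    unfolding h_def using nsq[of "\<phi> X"] by (simp add: algebra_simps)
  define f1 where "f1 r = (cmod (\<phi> r))^2" for r
  define f2 where "f2 r = (r-R)*(2*Re (\<phi> r * cnj (\<phi>' r)))" for r
  define g where "g r = (r-R)^2*(cmod (\<phi>' r))^2" for r
  have i1: "f1 integrable_on {R..X}" unfolding f1_def
    by (intro integrable_continuous_interval continuous_intros cphi)
  have i2: "f2 integrable_on {R..X}" unfolding f2_def
    by (intro integrable_continuous_interval continuous_intros cphi cont)
  have i3: "g integrable_on {R..X}" unfolding g_def
    by (intro integrable_continuous_interval continuous_intros cphi cont)
  have A: "integral {R..X} f1 + integral {R..X} f2 = (X-R)*(cmod (\<phi> X))^2"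
  proof -
    have "((\<lambda>r. f1 r + f2 r) has_integral (X-R)*(cmod (\<phi> X))^2) {R..X}"
      using hi unfolding re_h' re_h f1_def f2_def .
    then show ?thesis using integral_add[OF i1 i2] by (simp add: integral_unique)
  qed
  have pw: "- f2 r \<le> f1 r / 2 + 2 * g r" for r
  proof -
    have "- f2 r \<le> \<bar>r-R\<bar> * (2 * cmod (\<phi> r * cnj (\<phi>' r)))"
    proof -
      have "- f2 r \<le> \<bar>f2 r\<bar>" by simp
      also have "\<dots> = \<bar>r-R\<bar> * (2*\<bar>Re (\<phi> r * cnj (\<phi>' r))\<bar>)" by (simp only: f2_def abs_mult abs_numeral)
      also have "\<dots> \<le> \<bar>r-R\<bar> * (2 * cmod (\<phi> r * cnj (\<phi>' r)))"
        by (intro mult_left_mono mult_left_mono[of _ _ 2] abs_Re_le_cmod) auto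
      finally show ?thesis .
    qed
    also have "\<dots> = 2 * cmod (\<phi> r) * (\<bar>r-R\<bar> * cmod (\<phi>' r))" by (simp add: norm_mult)
    also have "\<dots> \<le> f1 r / 2 + 2 * g r"
    proof -
      define p where "p = cmod (\<phi> r)"
      define q where "q = \<bar>r-R\<bar> * cmod (\<phi>' r)"
      have "0 \<le> (p - 2*q)^2" by simp
      then have "2*p*q \<le> p^2/2 + 2*q^2" by (simp add: power2_eq_square algebra_simps)
      moreover have "q^2 = g r" unfolding q_def g_def by (simp add: power_mult_distrib)
      ultimately show ?thesis unfolding p_def f1_def q_def by simp
    qed
    finally show ?thesis .
  qed
  have "- integral {R..X} f2 \<le> integral {R..X} f1 / 2 + 2 * integral {R..X} g"
  proof -
    have j1: "(\<lambda>r. - f2 r) integrable_on {R..X}" using i2 by (rule integrable_neg)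
    have j2: "(\<lambda>r. f1 r / 2) integrable_on {R..X}" using i1 by (rule integrable_on_divide)
    have j3: "(\<lambda>r. 2 * g r) integrable_on {R..X}" using i3 by (simp add: integrable_on_cmult_iff)
    have "integral {R..X} (\<lambda>r. - f2 r) \<le> integral {R..X} (\<lambda>r. f1 r / 2 + 2 * g r)"
      by (intro integral_le pw j1 integrable_add j2 j3) 
    also have "\<dots> = integral {R..X} f1 / 2 + 2 * integral {R..X} g"
      using j2 j3 by (simp add: integral_add)
    finally show ?thesis by (simp add: integral_neg i2)
  qed
  with A show ?thesis unfolding f1_def g_def by linarith
qed

lemma kerr_bound:
  fixes M a :: real
  assumes "M > 0" and "\<bar>a\<bar> < M"
  shows "\<exists>k>0. Kerr_rplus M a > 0 \<and> (\<forall>r\<ge>Kerr_rplus M a. (r - Kerr_rplus M a)^2 \<le> (1/k^2) * ((Kerr_mu M a r)^2 * r^2))"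
proof -
  define s where "s = sqrt (M^2 - a^2)"
  define R where "R = Kerr_rplus M a"
  define rm where "rm = M - s"
  have a2: "a^2 < M^2" using assms by (metis abs_ge_zero power2_abs power_strict_mono zero_less_numeral)
  have s0: "s > 0" unfolding s_def using a2 by simp
  have s2: "s^2 = M^2 - a^2" unfolding s_def using a2 by simp
  have sM: "s \<le> M"
  proof -
    have "sqrt (M^2 - a^2) \<le> sqrt (M^2)" by (rule real_sqrt_le_mono) simp
    then show ?thesis unfolding s_def using assms by simp
  qed
  have R: "R = M + s" unfolding R_def Kerr_rplus_def s_def by simp
  have R0: "R > 0" using R s0 assms by simp
  have rm0: "rm \<ge> 0" using sM rm_def by simp
  have Rrm: "R - rm > 0" using R rm_def s0 by simp
  have aR: "a^2 \<le> R^2" using a2 R s0 assms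
    by (smt (verit) power_mono)
  have Delta: "Kerr_Delta M a r = (r-R)*(r-rm)" for r
    unfolding Kerr_Delta_def R rm_def using s2 by (simp add: algebra_simps power2_eq_square)
  define k where "k = ((R-rm)/R) * (R^2/(R^2+a^2))"
  have k0: "k > 0" unfolding k_def using Rrm R0 by (intro mult_pos_pos divide_pos_pos) (auto simp: add_pos_nonneg)
  have key: "(r - R)^2 \<le> (1/k^2) * ((Kerr_mu M a r)^2 * r^2)" if r: "r \<ge> R" for r
  proof -
    have r0: "r > 0" using r R0 by simp
    define f where "f = ((r-rm)/r) * (r^2/(r^2+a^2))"
    have pos: "r^2 + a^2 > 0" using r0 by (simp add: add_pos_nonneg)
    have posR: "R^2 + a^2 > 0" using R0 by (simp add: add_pos_nonneg)
    have mu: "Kerr_mu M a r * r = (r-R) * f"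
    proof -
      have e1: "(r-rm)/r * r^2 = (r-rm)*r" using r0 by (simp add: power2_eq_square)
      have "f = ((r-rm)/r * r^2)/(r^2+a^2)" unfolding f_def by (simp only: times_divide_eq_right)
      then have "f = (r-rm)*r/(r^2+a^2)" by (simp only: e1)
      then show ?thesis unfolding Kerr_mu_def Delta by simp
    qed
    have f1: "(R-rm)/R \<le> (r-rm)/r"
    proof -
      have "rm * R \<le> rm * r" using rm0 r by (intro mult_left_mono) auto
      then have "(R-rm)*r \<le> (r-rm)*R" by (simp add: algebra_simps)
      then show ?thesis using r0 R0 by (simp add: divide_simps)
    qed
    have f2: "R^2/(R^2+a^2) \<le> r^2/(r^2+a^2)"
    proof -
      have "R^2 \<le> r^2" using r R0 by (intro power_mono) auto
      then have "R^2 * a^2 \<le> r^2 * a^2" by (intro mult_right_mono) auto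
      then have "R^2*(r^2+a^2) \<le> r^2*(R^2+a^2)" by (simp add: algebra_simps)
      then show ?thesis using pos posR by (simp add: divide_simps)
    qed
    have kf: "k \<le> f" unfolding k_def f_def
    proof (intro mult_mono f1 f2)
      have "0 \<le> (R-rm)/R" using Rrm R0 by simp
      then show "0 \<le> (r-rm)/r" using f1 by linarith
      show "0 \<le> R^2/(R^2+a^2)" by simp
    qed
    have "k^2 * (r-R)^2 \<le> f^2 * (r-R)^2"
      using kf k0 by (intro mult_right_mono power_mono) auto
    also have "\<dots> = (Kerr_mu M a r)^2 * r^2"
      using mu by (metis power_mult_distrib mult.commute)
    finally show ?thesis using k0 by (simp add: field_simps)
  qed
  show ?thesis using k0 R0 key unfolding R_def by blast
qed

lemma set_nn_integral_interval:
  fixes f :: "real \<Rightarrow> real"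
  assumes "continuous_on {A..B} f" "\<forall>x\<in>{A..B}. 0 \<le> f x"
  shows "(\<integral>\<^sup>+x\<in>{A..B}. ennreal (f x) \<partial>lborel) = ennreal (integral {A..B} f)"
proof -
  have hi: "(f has_integral integral {A..B} f) {A..B}"
    using integrable_continuous_interval[OF assms(1)] by (simp add: has_integral_integral)
  have "integral\<^sup>N lborel (\<lambda>x. indicator {A..B} x * f x) = integral {A..B} f"
    by (rule nn_integral_has_integral_lebesgue[OF _ hi]) (use assms in auto)
  moreover have "(\<lambda>x. ennreal (f x) * indicator {A..B} x) = (\<lambda>x. ennreal (indicator {A..B} x * f x))"
    by (auto split: split_indicator)
  ultimately show ?thesis by simp
qed

lemma meas_interval:
  fixes f :: "real \<Rightarrow> real"
  assumes "continuous_on {A..B} f"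
  shows "(\<lambda>x. ennreal (f x) * indicator {A..B} x) \<in> borel_measurable lborel"
proof -
  have "(\<lambda>x. indicator {A..B} x *\<^sub>R f x) \<in> borel_measurable borel"
    by (rule borel_measurable_continuous_on_indicator) (use assms in auto)
  then have "(\<lambda>x. ennreal (indicator {A..B} x *\<^sub>R f x)) \<in> borel_measurable lborel"
    by measurable
  moreover have "(\<lambda>x. ennreal (f x) * indicator {A..B} x) = (\<lambda>x. ennreal (indicator {A..B} x *\<^sub>R f x))"
    by (auto split: split_indicator)
  ultimately show ?thesis by simp
qed

theorem lemma2p15:
  fixes M a :: real
  assumes "M > 0" and "\<bar>a\<bar> < M"
  shows "\<exists>C>0. \<forall>(\<phi>::real \<Rightarrow> complex) \<phi>'.
    ((\<forall>r\<in>{Kerr_rplus M a..}. (\<phi> has_vector_derivative \<phi>' r) (at r within {Kerr_rplus M a..}))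
     \<and> continuous_on {Kerr_rplus M a..} \<phi>') \<longrightarrow>
    ((\<forall>r'>Kerr_rplus M a.
        integral {Kerr_rplus M a..r'} (\<lambda>r. (cmod (\<phi> r))^2)
        \<le> C * (integral {Kerr_rplus M a..r'}
                 (\<lambda>r. (Kerr_mu M a r)^2 * r^2 * (cmod (\<phi>' r))^2)
               + (r' - Kerr_rplus M a) * (cmod (\<phi> r'))^2))
     \<and> (((\<lambda>r. r * (cmod (\<phi> r))^2) \<longlongrightarrow> 0) at_top \<longrightarrow>
        (\<integral>\<^sup>+ r\<in>{Kerr_rplus M a..}. ennreal ((cmod (\<phi> r))^2) \<partial>lborel)
        \<le> ennreal C * (\<integral>\<^sup>+ r\<in>{Kerr_rplus M a..}.
              ennreal ((Kerr_mu M a r)^2 * r^2 * (cmod (\<phi>' r))^2) \<partial>lborel)))"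
  proof -
  obtain k where k0: "k > 0" and R0: "Kerr_rplus M a > 0"
    and key: "\<And>r. r \<ge> Kerr_rplus M a \<Longrightarrow> (r - Kerr_rplus M a)^2 \<le> (1/k^2) * ((Kerr_mu M a r)^2 * r^2)"
    using kerr_bound[OF assms] by blast
  define R where "R = Kerr_rplus M a"
  define C where "C = max 2 (4/k^2)"
  have C0: "C > 0" unfolding C_def by simp
  have C2: "2 \<le> C" and Ck: "4/k^2 \<le> C" unfolding C_def by auto
  have R0': "R > 0" using R0 R_def by simp
  have keyR: "\<And>r. r \<ge> R \<Longrightarrow> (r - R)^2 \<le> (1/k^2) * ((Kerr_mu M a r)^2 * r^2)"
    using key R_def by simp
  have den: "r^2 + a^2 \<noteq> 0" if "r \<ge> R" for r
    using that R0' by (smt (verit) zero_le_power2 zero_less_power)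
  have main: "((\<forall>r\<in>{R..}. (\<phi> has_vector_derivative \<phi>' r) (at r within {R..}))
     \<and> continuous_on {R..} \<phi>') \<longrightarrow>
    ((\<forall>r'>R.
        integral {R..r'} (\<lambda>r. (cmod (\<phi> r))^2)
        \<le> C * (integral {R..r'}
                 (\<lambda>r. (Kerr_mu M a r)^2 * r^2 * (cmod (\<phi>' r))^2)
               + (r' - R) * (cmod (\<phi> r'))^2))
     \<and> (((\<lambda>r. r * (cmod (\<phi> r))^2) \<longlongrightarrow> 0) at_top \<longrightarrow>
        (\<integral>\<^sup>+ r\<in>{R..}. ennreal ((cmod (\<phi> r))^2) \<partial>lborel)
        \<le> ennreal C * (\<integral>\<^sup>+ r\<in>{R..}.
              ennreal ((Kerr_mu M a r)^2 * r^2 * (cmod (\<phi>' r))^2) \<partial>lborel)))"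
    for \<phi> \<phi>' :: "real \<Rightarrow> complex"
  proof (intro impI)
    assume H: "(\<forall>r\<in>{R..}. (\<phi> has_vector_derivative \<phi>' r) (at r within {R..}))
     \<and> continuous_on {R..} \<phi>'"
    have der: "\<And>r. r \<in> {R..} \<Longrightarrow> (\<phi> has_vector_derivative \<phi>' r) (at r within {R..})"
      and cont: "continuous_on {R..} \<phi>'" using H by auto
    have cphi: "continuous_on {R..} \<phi>" by (rule continuous_on_vector_derivative) (use der in auto)
    have cJ: "continuous_on {R..X} (\<lambda>r. (Kerr_mu M a r)^2 * r^2 * (cmod (\<phi>' r))^2)" for X
      unfolding Kerr_mu_def Kerr_Delta_def
      by (intro continuous_intros continuous_on_subset[OF cont]) (auto dest: den)
    have cF: "continuous_on {R..X} (\<lambda>r. (cmod (\<phi> r))^2)" for X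
      by (intro continuous_intros continuous_on_subset[OF cphi]) auto
    have bound: "integral {R..X} (\<lambda>r. (cmod (\<phi> r))^2) \<le> 2*((X-R)*(cmod (\<phi> X))^2)
       + C * integral {R..X} (\<lambda>r. (Kerr_mu M a r)^2 * r^2 * (cmod (\<phi>' r))^2)" if X: "X > R" for X
    proof -
      have d: "\<forall>r\<in>{R..X}. (\<phi> has_vector_derivative \<phi>' r) (at r within {R..X})"
        using der by (auto intro: has_vector_derivative_within_subset[of _ _ _ "{R..}"])
      have c: "continuous_on {R..X} \<phi>'" by (rule continuous_on_subset[OF cont]) auto
      have hc: "integral {R..X} (\<lambda>r. (cmod (\<phi> r))^2) \<le> 2*((X-R)*(cmod (\<phi> X))^2) + 4*integral {R..X} (\<lambda>r. (r-R)^2*(cmod (\<phi>' r))^2)"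
        by (rule hardy_core[OF X d c])
      have ig: "(\<lambda>r. (r-R)^2*(cmod (\<phi>' r))^2) integrable_on {R..X}"
        by (intro integrable_continuous_interval continuous_intros c)
      have iJ: "(\<lambda>r. (1/k^2) * ((Kerr_mu M a r)^2 * r^2 * (cmod (\<phi>' r))^2)) integrable_on {R..X}"
        by (intro integrable_continuous_interval continuous_on_mult continuous_on_const cJ)
      have "integral {R..X} (\<lambda>r. (r-R)^2*(cmod (\<phi>' r))^2)
            \<le> integral {R..X} (\<lambda>r. (1/k^2) * ((Kerr_mu M a r)^2 * r^2 * (cmod (\<phi>' r))^2))"
      proof (rule integral_le[OF ig iJ])
        fix r assume "r \<in> {R..X}"
        then have "(r - R)^2 \<le> (1/k^2) * ((Kerr_mu M a r)^2 * r^2)" using keyR by auto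
        from mult_right_mono[OF this, of "(cmod (\<phi>' r))^2"]
        show "(r-R)^2*(cmod (\<phi>' r))^2 \<le> (1/k^2) * ((Kerr_mu M a r)^2 * r^2 * (cmod (\<phi>' r))^2)"
          by (simp add: mult.assoc)
      qed
      also have "\<dots> = (1/k^2) * integral {R..X} (\<lambda>r. (Kerr_mu M a r)^2 * r^2 * (cmod (\<phi>' r))^2)"
        by simp
      finally have "4 * integral {R..X} (\<lambda>r. (r-R)^2*(cmod (\<phi>' r))^2)
         \<le> (4/k^2) * integral {R..X} (\<lambda>r. (Kerr_mu M a r)^2 * r^2 * (cmod (\<phi>' r))^2)" by simp
      also have "\<dots> \<le> C * integral {R..X} (\<lambda>r. (Kerr_mu M a r)^2 * r^2 * (cmod (\<phi>' r))^2)"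
        by (intro mult_right_mono Ck integral_nonneg integrable_continuous_interval cJ) auto
      finally show ?thesis using hc by linarith
    qed
    show "(\<forall>r'>R.
        integral {R..r'} (\<lambda>r. (cmod (\<phi> r))^2)
        \<le> C * (integral {R..r'}
                 (\<lambda>r. (Kerr_mu M a r)^2 * r^2 * (cmod (\<phi>' r))^2)
               + (r' - R) * (cmod (\<phi> r'))^2))
     \<and> (((\<lambda>r. r * (cmod (\<phi> r))^2) \<longlongrightarrow> 0) at_top \<longrightarrow>
        (\<integral>\<^sup>+ r\<in>{R..}. ennreal ((cmod (\<phi> r))^2) \<partial>lborel)
        \<le> ennreal C * (\<integral>\<^sup>+ r\<in>{R..}.
              ennreal ((Kerr_mu M a r)^2 * r^2 * (cmod (\<phi>' r))^2) \<partial>lborel))"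
    proof (intro conjI allI impI)
      fix X assume X: "X > R"
      have A0: "0 \<le> (X - R) * (cmod (\<phi> X))^2" using X by simp
      have J0: "0 \<le> integral {R..X} (\<lambda>r. (Kerr_mu M a r)^2 * r^2 * (cmod (\<phi>' r))^2)"
        by (intro integral_nonneg integrable_continuous_interval cJ) auto
      have "2*((X-R)*(cmod (\<phi> X))^2) \<le> C*((X-R)*(cmod (\<phi> X))^2)"
        by (intro mult_right_mono C2 A0)
      then show "integral {R..X} (\<lambda>r. (cmod (\<phi> r))^2)
        \<le> C * (integral {R..X} (\<lambda>r. (Kerr_mu M a r)^2 * r^2 * (cmod (\<phi>' r))^2)
               + (X - R) * (cmod (\<phi> X))^2)"
        using bound[OF X] by (simp add: distrib_left)
    next
      assume lim: "((\<lambda>r. r * (cmod (\<phi> r))^2) \<longlongrightarrow> 0) at_top"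
      define F where "F x = ennreal ((cmod (\<phi> x))^2)" for x
      define K where "K = (\<integral>\<^sup>+ r\<in>{R..}. ennreal ((Kerr_mu M a r)^2 * r^2 * (cmod (\<phi>' r))^2) \<partial>lborel)"
      have lim0: "((\<lambda>r. 2*((r-R)*(cmod (\<phi> r))^2)) \<longlongrightarrow> 0) at_top"
      proof (rule tendsto_sandwich[of "\<lambda>_. 0" _ _ "\<lambda>r. 2*(r * (cmod (\<phi> r))^2)"])
        show "\<forall>\<^sub>F r in at_top. 0 \<le> 2*((r-R)*(cmod (\<phi> r))^2)"
          using eventually_ge_at_top[of R] by eventually_elim simp
        show "\<forall>\<^sub>F r in at_top. 2*((r-R)*(cmod (\<phi> r))^2) \<le> 2*(r * (cmod (\<phi> r))^2)"
          using eventually_ge_at_top[of R]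
        proof eventually_elim
          case (elim r)
          show ?case using R0' by (intro mult_left_mono mult_right_mono) auto
        qed
        show "((\<lambda>r. 2*(r * (cmod (\<phi> r))^2)) \<longlongrightarrow> 0) at_top"
          using tendsto_mult[OF tendsto_const[of 2] lim] by simp
      qed simp
      have limE: "((\<lambda>r. ennreal (2*((r-R)*(cmod (\<phi> r))^2)) + ennreal C * K) \<longlongrightarrow> ennreal C * K) at_top"
        using tendsto_add[OF tendsto_ennrealI[OF lim0] tendsto_const[of "ennreal C * K"]] by simp
      have Pn: "(\<integral>\<^sup>+ x. F x * indicator {R..R + real n} x \<partial>lborel) \<le> ennreal C * K" for n :: nat
      proof (rule tendsto_lowerbound[OF limE])
        show "at_top \<noteq> (bot :: real filter)" by simp
        show "\<forall>\<^sub>F r in at_top. (\<integral>\<^sup>+ x. F x * indicator {R..R + real n} x \<partial>lborel)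
               \<le> ennreal (2*((r-R)*(cmod (\<phi> r))^2)) + ennreal C * K"
          using eventually_ge_at_top[of "R + real n + 1"]
        proof eventually_elim
          case (elim X)
          then have X: "X > R" by simp
          have "(\<integral>\<^sup>+ x. F x * indicator {R..R + real n} x \<partial>lborel) \<le> (\<integral>\<^sup>+ x. F x * indicator {R..X} x \<partial>lborel)"
            using elim by (intro nn_integral_mono) (auto split: split_indicator)
          also have "\<dots> = ennreal (integral {R..X} (\<lambda>r. (cmod (\<phi> r))^2))"
            unfolding F_def by (rule set_nn_integral_interval[OF cF]) auto
          also have "\<dots> \<le> ennreal (2*((X-R)*(cmod (\<phi> X))^2)
               + C * integral {R..X} (\<lambda>r. (Kerr_mu M a r)^2 * r^2 * (cmod (\<phi>' r))^2))"
            by (rule ennreal_leI[OF bound[OF X]])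
          also have "\<dots> = ennreal (2*((X-R)*(cmod (\<phi> X))^2))
               + ennreal C * ennreal (integral {R..X} (\<lambda>r. (Kerr_mu M a r)^2 * r^2 * (cmod (\<phi>' r))^2))"
            using X C0 by (simp add: ennreal_plus ennreal_mult integral_nonneg integrable_continuous_interval cJ)
          also have "ennreal (integral {R..X} (\<lambda>r. (Kerr_mu M a r)^2 * r^2 * (cmod (\<phi>' r))^2))
               = (\<integral>\<^sup>+ r\<in>{R..X}. ennreal ((Kerr_mu M a r)^2 * r^2 * (cmod (\<phi>' r))^2) \<partial>lborel)"
            by (rule set_nn_integral_interval[OF cJ, symmetric]) auto
          also have "\<dots> \<le> K" unfolding K_def
            by (intro nn_integral_mono) (auto split: split_indicator)
          finally show ?case by (simp add: add_left_mono mult_left_mono)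
        qed
      qed
      have meas: "(\<lambda>x. F x * indicator {R..R + real n} x) \<in> borel_measurable lborel" for n :: nat
        unfolding F_def by (rule meas_interval[OF cF])
      have inc: "incseq (\<lambda>n x. F x * indicator {R..R + real n} x)"
        unfolding incseq_def le_fun_def
        by (auto intro!: mult_left_mono split: split_indicator)
      have sup: "(SUP n. F x * indicator {R..R + real n} x) = F x * indicator {R..} x" for x
      proof (cases "x \<ge> R")
        case True
        show ?thesis
        proof (rule antisym)
          show "(SUP n. F x * indicator {R..R + real n} x) \<le> F x * indicator {R..} x"
            using True by (intro SUP_least) (auto split: split_indicator)
          have "x \<le> R + real (nat \<lceil>x - R\<rceil>)" by linarith
          then show "F x * indicator {R..} x \<le> (SUP n. F x * indicator {R..R + real n} x)"
            using True by (intro SUP_upper2[of "nat \<lceil>x - R\<rceil>"]) (auto split: split_indicator)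
        qed
      next
        case False
        then show ?thesis by (simp split: split_indicator)
      qed
      have "(\<integral>\<^sup>+ r\<in>{R..}. F r \<partial>lborel) = (\<integral>\<^sup>+ x. (SUP n. F x * indicator {R..R + real n} x) \<partial>lborel)"
        by (simp add: sup)
      also have "\<dots> = (SUP n. \<integral>\<^sup>+ x. F x * indicator {R..R + real n} x \<partial>lborel)"
        by (rule nn_integral_monotone_convergence_SUP[OF inc meas])
      also have "\<dots> \<le> ennreal C * K" by (intro SUP_least Pn)
      finally show "(\<integral>\<^sup>+ r\<in>{R..}. ennreal ((cmod (\<phi> r))^2) \<partial>lborel)
        \<le> ennreal C * (\<integral>\<^sup>+ r\<in>{R..}.
              ennreal ((Kerr_mu M a r)^2 * r^2 * (cmod (\<phi>' r))^2) \<partial>lborel)"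
        unfolding F_def K_def .
    qed
  qed
  show ?thesis using C0 main unfolding R_def by blast
qed

end
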